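(* Let $p(x_1,\ldots,x_n)$ be a polynomial in $x_1,x_1^{-1},\ldots,x_n,x_n^{-1}$ over $\mathbb{C}$ and fix $i$ with $1\le i\le n$. Consider the operator $\operatorname{Op}=\operatorname{id}+\Delta_{k_i}\,p(E_{k_1},\ldots,E_{k_n})$ on $\mathbb{C}[k_1,\ldots,k_n]$. Then $\operatorname{Op}$ is invertible, with inverse $$\operatorname{Op}^{-1}=\sum_{l=0}^{\infty}(-1)^l\Delta_{k_i}^l\,p(E_{k_1},\ldots,E_{k_n})^l,$$ where the $l=0$ term is $\operatorname{id}$. Moreover, for every $G\in\mathbb{C}[k_1,\ldots,k_n]$, $$\deg_{k_i}G=\deg_{k_i}\operatorname{Op}G=\deg_{k_i}\operatorname{Op}^{-1}G.$$
   Context: $E_{k_j}$ is the shift operator in the variable $k_j$, $E_{k_j}f(\ldots,k_j,\ldots)=f(\ldots,k_j+1,\ldots)$, with inverse $E_{k_j}^{-1}$; $\Delta_{k_j}=E_{k_j}-\operatorname{id}$. These operators commute, so $p(E_{k_1},\ldots,E_{k_n})$ is a well-defined operator on polynomials. Products of operators denote composition. *)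

theory Defs
  imports Complex_Main "HOL-Library.Poly_Mapping"
begin

text \<open>Variable k_j (paper's k_{j+1}) is indexed by j :: nat.\<close>

type_synonym cpoly = "(nat \<Rightarrow>\<^sub>0 nat) \<Rightarrow>\<^sub>0 complex"

type_synonym claurent = "(nat \<Rightarrow>\<^sub>0 int) \<Rightarrow>\<^sub>0 complex"

definition Var :: "nat \<Rightarrow> cpoly" where
  "Var v = Poly_Mapping.single (Poly_Mapping.single v 1) 1"

definition Const :: "complex \<Rightarrow> cpoly" where
  "Const c = Poly_Mapping.single 0 c"

definition subst :: "(nat \<Rightarrow> cpoly) \<Rightarrow> cpoly \<Rightarrow> cpoly" where
  "subst \<sigma> G = sum (\<lambda>m::nat \<Rightarrow>\<^sub>0 nat. Const (Poly_Mapping.lookup G m) * prod (\<lambda>v::nat. \<sigma> v ^ Poly_Mapping.lookup m v) (Poly_Mapping.keys m)) (Poly_Mapping.keys G)"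

definition vars :: "cpoly \<Rightarrow> nat set" where
  "vars G = \<Union> (Poly_Mapping.keys ` Poly_Mapping.keys G)"

definition lvars :: "claurent \<Rightarrow> nat set" where
  "lvars p = \<Union> (Poly_Mapping.keys ` Poly_Mapping.keys p)"

definition PolyRing :: "nat \<Rightarrow> cpoly set" where
  "PolyRing n = {G. vars G \<subseteq> {..<n}}"

text \<open>Degree in the variable k_i (degree of the zero polynomial taken as 0).\<close>
definition deg :: "nat \<Rightarrow> cpoly \<Rightarrow> nat" where
  "deg i G = Max (insert 0 ((\<lambda>m. Poly_Mapping.lookup m i) ` Poly_Mapping.keys G))"

definition Eop :: "nat \<Rightarrow> cpoly \<Rightarrow> cpoly" where
  "Eop j = subst (\<lambda>v. if v = j then Var v + 1 else Var v)"

definition Einv :: "nat \<Rightarrow> cpoly \<Rightarrow> cpoly" where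
  "Einv j = subst (\<lambda>v. if v = j then Var v - 1 else Var v)"

definition Delta :: "nat \<Rightarrow> cpoly \<Rightarrow> cpoly" where
  "Delta j G = Eop j G - G"

definition Epow :: "nat \<Rightarrow> int \<Rightarrow> cpoly \<Rightarrow> cpoly" where
  "Epow j z = (if z \<ge> 0 then Eop j ^^ nat z else Einv j ^^ nat (- z))"

definition Emon :: "(nat \<Rightarrow>\<^sub>0 int) \<Rightarrow> cpoly \<Rightarrow> cpoly" where
  "Emon a = fold (\<lambda>v f. Epow v (Poly_Mapping.lookup a v) \<circ> f) (sorted_list_of_set (Poly_Mapping.keys a)) id"

definition pE :: "claurent \<Rightarrow> cpoly \<Rightarrow> cpoly" where
  "pE p G = (\<Sum>a\<in>Poly_Mapping.keys p. Const (Poly_Mapping.lookup p a) * Emon a G)"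

end

theory Submission
  imports Defs
begin

lemma lookup_Const_mult: "Poly_Mapping.lookup (Const c * G) m = c * Poly_Mapping.lookup G m"
proof -
  have "Const c * G = Poly_Mapping.map ((*) c) G"
    by (simp add: Const_def mult_map_scale_conv_mult)
  then show ?thesis by (simp add: map.rep_eq when_def)
qed

lemma Const_mult: "Const a * Const b = Const (a * b)"
  by (simp add: Const_def mult_single)
lemma Const_0[simp]: "Const 0 = 0" by (simp add: Const_def)
lemma Const_1[simp]: "Const 1 = 1" by (simp add: Const_def)
lemma Const_uminus: "Const (- a) = - Const a" by (simp add: Const_def single_uminus)
lemma Const_add: "Const (a + b) = Const a + Const b" by (simp add: Const_def single_add)

lemma pm_expand:
  fixes G :: "'a \<Rightarrow>\<^sub>0 'b::comm_monoid_add"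
  assumes "finite S" "Poly_Mapping.keys G \<subseteq> S"
  shows "G = (\<Sum>m\<in>S. Poly_Mapping.single m (Poly_Mapping.lookup G m))"
proof (rule poly_mapping_eqI)
  fix k
  have "Poly_Mapping.lookup (\<Sum>m\<in>S. Poly_Mapping.single m (Poly_Mapping.lookup G m)) k
     = (\<Sum>m\<in>S. (Poly_Mapping.lookup G m when m = k))"
    by (simp add: lookup_sum lookup_single)
  also have "\<dots> = Poly_Mapping.lookup G k"
  proof (cases "k \<in> S")
    case True
    then show ?thesis by (simp add: when_def assms(1))
  next
    case False
    then have "Poly_Mapping.lookup G k = 0" using assms(2) by (auto simp: in_keys_iff)
    then show ?thesis by (auto simp: when_def intro: sum.neutral)
  qed
  finally show "Poly_Mapping.lookup G k = Poly_Mapping.lookup (\<Sum>m\<in>S. Poly_Mapping.single m (Poly_Mapping.lookup G m)) k" by simp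
qed

lemma pm_expand_keys:
  fixes G :: "'a \<Rightarrow>\<^sub>0 'b::comm_monoid_add"
  shows "G = (\<Sum>m\<in>Poly_Mapping.keys G. Poly_Mapping.single m (Poly_Mapping.lookup G m))"
  by (rule pm_expand) auto

definition Mon :: "(nat \<Rightarrow> cpoly) \<Rightarrow> (nat \<Rightarrow>\<^sub>0 nat) \<Rightarrow> cpoly" where
  "Mon \<sigma> m = (\<Prod>v\<in>Poly_Mapping.keys m. \<sigma> v ^ Poly_Mapping.lookup m v)"

lemma subst_alt: "subst \<sigma> G = (\<Sum>m\<in>Poly_Mapping.keys G. Const (Poly_Mapping.lookup G m) * Mon \<sigma> m)"
  by (simp add: subst_def Mon_def)

lemma subst_superset:
  assumes "finite S" "Poly_Mapping.keys G \<subseteq> S"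
  shows "subst \<sigma> G = (\<Sum>m\<in>S. Const (Poly_Mapping.lookup G m) * Mon \<sigma> m)"
  unfolding subst_alt
  by (rule sum.mono_neutral_left) (use assms in \<open>auto simp: in_keys_iff\<close>)

lemma Mon_superset:
  assumes "finite S" "Poly_Mapping.keys m \<subseteq> S"
  shows "Mon \<sigma> m = (\<Prod>v\<in>S. \<sigma> v ^ Poly_Mapping.lookup m v)"
  unfolding Mon_def
  by (rule prod.mono_neutral_left) (use assms in \<open>auto simp: in_keys_iff\<close>)

lemma Mon_add: "Mon \<sigma> (a + b) = Mon \<sigma> a * Mon \<sigma> b"
proof -
  let ?S = "Poly_Mapping.keys a \<union> Poly_Mapping.keys b"
  have "Mon \<sigma> (a + b) = (\<Prod>v\<in>?S. \<sigma> v ^ Poly_Mapping.lookup (a + b) v)"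
    by (rule Mon_superset) (auto simp: keys_add)
  also have "\<dots> = (\<Prod>v\<in>?S. \<sigma> v ^ Poly_Mapping.lookup a v * \<sigma> v ^ Poly_Mapping.lookup b v)"
    by (simp add: lookup_add power_add)
  also have "\<dots> = (\<Prod>v\<in>?S. \<sigma> v ^ Poly_Mapping.lookup a v) * (\<Prod>v\<in>?S. \<sigma> v ^ Poly_Mapping.lookup b v)"
    by (simp add: prod.distrib)
  also have "\<dots> = Mon \<sigma> a * Mon \<sigma> b"
    by (simp add: Mon_superset[symmetric])
  finally show ?thesis .
qed

lemma Mon_0[simp]: "Mon \<sigma> 0 = 1" by (simp add: Mon_def)

lemma subst_add: "subst \<sigma> (G + H) = subst \<sigma> G + subst \<sigma> H"
proof -
  let ?S = "Poly_Mapping.keys G \<union> Poly_Mapping.keys H"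
  have "subst \<sigma> (G + H) = (\<Sum>m\<in>?S. Const (Poly_Mapping.lookup (G + H) m) * Mon \<sigma> m)"
    by (rule subst_superset) (auto simp: keys_add)
  also have "\<dots> = (\<Sum>m\<in>?S. Const (Poly_Mapping.lookup G m) * Mon \<sigma> m + Const (Poly_Mapping.lookup H m) * Mon \<sigma> m)"
    by (simp add: lookup_add Const_add distrib_right)
  also have "\<dots> = subst \<sigma> G + subst \<sigma> H"
    by (simp add: sum.distrib subst_superset[symmetric])
  finally show ?thesis .
qed

lemma subst_0[simp]: "subst \<sigma> 0 = 0" by (simp add: subst_def)

lemma subst_uminus: "subst \<sigma> (- G) = - subst \<sigma> G"
  by (metis add.right_inverse add_eq_0_iff subst_0 subst_add)

lemma subst_diff: "subst \<sigma> (G - H) = subst \<sigma> G - subst \<sigma> H"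
  by (metis diff_conv_add_uminus subst_add subst_uminus)

lemma subst_sum: "subst \<sigma> (\<Sum>x\<in>A. f x) = (\<Sum>x\<in>A. subst \<sigma> (f x))"
  by (induction A rule: infinite_finite_induct) (auto simp: subst_add)

lemma subst_single: "subst \<sigma> (Poly_Mapping.single m c) = Const c * Mon \<sigma> m"
  by (simp add: subst_alt)

lemma subst_single_mult:
  "subst \<sigma> (Poly_Mapping.single m c * H) = Const c * Mon \<sigma> m * subst \<sigma> H"
proof -
  have "Poly_Mapping.single m c * H = (\<Sum>m'\<in>Poly_Mapping.keys H. Poly_Mapping.single m c * Poly_Mapping.single m' (Poly_Mapping.lookup H m'))"
    by (subst pm_expand_keys[of H]) (simp add: sum_distrib_left)
  also have "\<dots> = (\<Sum>m'\<in>Poly_Mapping.keys H. Poly_Mapping.single (m + m') (c * Poly_Mapping.lookup H m'))"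
    by (simp add: mult_single)
  finally have "subst \<sigma> (Poly_Mapping.single m c * H) = (\<Sum>m'\<in>Poly_Mapping.keys H. Const (c * Poly_Mapping.lookup H m') * Mon \<sigma> (m + m'))"
    by (simp add: subst_sum subst_single)
  also have "\<dots> = (\<Sum>m'\<in>Poly_Mapping.keys H. Const c * Mon \<sigma> m * (Const (Poly_Mapping.lookup H m') * Mon \<sigma> m'))"
    by (simp add: Mon_add Const_mult[symmetric] algebra_simps)
  also have "\<dots> = Const c * Mon \<sigma> m * subst \<sigma> H"
    by (simp add: subst_alt sum_distrib_left)
  finally show ?thesis .
qed

lemma subst_mult: "subst \<sigma> (G * H) = subst \<sigma> G * subst \<sigma> H"
proof -
  have "G * H = (\<Sum>m\<in>Poly_Mapping.keys G. Poly_Mapping.single m (Poly_Mapping.lookup G m) * H)"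
    by (subst pm_expand_keys[of G]) (simp add: sum_distrib_right)
  then have "subst \<sigma> (G * H) = (\<Sum>m\<in>Poly_Mapping.keys G. Const (Poly_Mapping.lookup G m) * Mon \<sigma> m * subst \<sigma> H)"
    by (simp add: subst_sum subst_single_mult)
  also have "\<dots> = subst \<sigma> G * subst \<sigma> H"
    by (simp add: subst_alt sum_distrib_right)
  finally show ?thesis .
qed

lemma subst_Const[simp]: "subst \<sigma> (Const c) = Const c"
  by (simp add: Const_def subst_single)

lemma subst_1[simp]: "subst \<sigma> 1 = 1"
  using subst_Const[of \<sigma> 1] by simp

lemma subst_power: "subst \<sigma> (G ^ k) = subst \<sigma> G ^ k"
  by (induction k) (auto simp: subst_mult)

lemma subst_prod: "subst \<sigma> (\<Prod>x\<in>A. f x) = (\<Prod>x\<in>A. subst \<sigma> (f x))"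
  by (induction A rule: infinite_finite_induct) (auto simp: subst_mult)

lemma subst_Var[simp]: "subst \<sigma> (Var v) = \<sigma> v"
  by (simp add: Var_def subst_single Mon_def)

lemma subst_Const_mult: "subst \<sigma> (Const c * G) = Const c * subst \<sigma> G"
  by (simp add: subst_mult)

lemma subst_comp: "subst \<sigma> (subst \<tau> G) = subst (\<lambda>v. subst \<sigma> (\<tau> v)) G"
proof -
  have "subst \<sigma> (subst \<tau> G) = (\<Sum>m\<in>Poly_Mapping.keys G. subst \<sigma> (Const (Poly_Mapping.lookup G m) * Mon \<tau> m))"
    by (simp only: subst_alt[of \<tau>] subst_sum)
  also have "\<dots> = (\<Sum>m\<in>Poly_Mapping.keys G. Const (Poly_Mapping.lookup G m) * Mon (\<lambda>v. subst \<sigma> (\<tau> v)) m)"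
    by (simp only: subst_mult subst_Const Mon_def subst_prod subst_power)
  also have "\<dots> = subst (\<lambda>v. subst \<sigma> (\<tau> v)) G"
    by (simp only: subst_alt)
  finally show ?thesis .
qed

lemma Var_power: "Var v ^ k = Poly_Mapping.single (Poly_Mapping.single v k) 1"
  by (induction k) (auto simp: Var_def mult_single single_add[symmetric])

lemma prod_single: "(\<Prod>v\<in>A. Poly_Mapping.single (f v) (1::complex)) = Poly_Mapping.single (\<Sum>v\<in>A. f v) 1"
  by (induction A rule: infinite_finite_induct) (auto simp: mult_single)

lemma Mon_Var: "Mon Var m = Poly_Mapping.single m 1"
proof -
  have "Mon Var m = Poly_Mapping.single (\<Sum>v\<in>Poly_Mapping.keys m. Poly_Mapping.single v (Poly_Mapping.lookup m v)) 1"
    by (simp add: Mon_def Var_power prod_single)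
  then show ?thesis by (simp flip: pm_expand_keys)
qed


definition lin :: "(cpoly \<Rightarrow> cpoly) \<Rightarrow> bool" where
  "lin f \<longleftrightarrow> (\<forall>x y. f (x + y) = f x + f y) \<and> (\<forall>c x. f (Const c * x) = Const c * f x)"

lemma linD: "lin f \<Longrightarrow> f (x + y) = f x + f y" "lin f \<Longrightarrow> f (Const c * x) = Const c * f x"
  by (auto simp: lin_def)

lemma lin_0: "lin f \<Longrightarrow> f 0 = 0"
  by (metis add_cancel_right_right linD(1))
lemma lin_uminus: "lin f \<Longrightarrow> f (- x) = - f x"
  by (metis add.right_inverse add_eq_0_iff lin_0 linD(1))
lemma lin_diff: "lin f \<Longrightarrow> f (x - y) = f x - f y"
  by (metis diff_conv_add_uminus linD(1) lin_uminus)
lemma lin_sum: "lin f \<Longrightarrow> f (\<Sum>a\<in>A. g a) = (\<Sum>a\<in>A. f (g a))"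
  by (induction A rule: infinite_finite_induct) (auto simp: lin_0 linD)

lemma lin_subst: "lin (subst \<sigma>)"
  by (simp add: lin_def subst_add subst_Const_mult)
lemma lin_id: "lin id" by (simp add: lin_def)
lemma lin_comp: "lin f \<Longrightarrow> lin g \<Longrightarrow> lin (f \<circ> g)" by (simp add: lin_def)
lemma lin_funpow: "lin f \<Longrightarrow> lin (f ^^ n)"
  by (induction n) (auto simp: lin_id lin_comp)

lemma lin_Eop: "lin (Eop j)" by (simp add: Eop_def lin_subst)
lemma lin_Einv: "lin (Einv j)" by (simp add: Einv_def lin_subst)
lemma lin_Epow: "lin (Epow j z)" by (simp add: Epow_def lin_Eop lin_Einv lin_funpow)

lemma lin_fold: "lin g \<Longrightarrow> lin (fold (\<lambda>v f. Epow v (h v) \<circ> f) xs g)"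
  by (induction xs arbitrary: g) (auto simp: lin_comp lin_Epow)

lemma lin_Emon: "lin (Emon a)" by (simp add: Emon_def lin_fold lin_id)

lemma lin_pE: "lin (pE p)"
  unfolding lin_def pE_def
  by (simp add: linD[OF lin_Emon] sum.distrib distrib_left sum_distrib_left mult.left_commute)

lemma lin_Delta: "lin (Delta j)"
  unfolding lin_def Delta_def
  by (simp add: linD[OF lin_Eop] right_diff_distrib)

definition comm :: "(cpoly \<Rightarrow> cpoly) \<Rightarrow> (cpoly \<Rightarrow> cpoly) \<Rightarrow> bool" where
  "comm f g \<longleftrightarrow> (\<forall>x. f (g x) = g (f x))"

lemma comm_sym: "comm f g \<Longrightarrow> comm g f" by (simp add: comm_def)
lemma comm_comp: "comm f h \<Longrightarrow> comm g h \<Longrightarrow> comm (f \<circ> g) h" by (simp add: comm_def)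
lemma comm_id: "comm id h" by (simp add: comm_def)
lemma comm_funpow: "comm f h \<Longrightarrow> comm (f ^^ n) h"
  by (induction n) (auto simp: comm_id comm_comp)

lemma Eop_Eop: "comm (Eop i) (Eop j)"
  unfolding comm_def Eop_def
  by (auto simp: subst_comp subst_add intro!: arg_cong[where f="\<lambda>s. subst s _"])

lemma Eop_Einv: "comm (Eop i) (Einv j)"
  unfolding comm_def Eop_def Einv_def
  by (auto simp: subst_comp subst_add subst_diff intro!: arg_cong[where f="\<lambda>s. subst s _"])

lemma Epow_Eop: "comm (Epow j z) (Eop i)"
  unfolding Epow_def
  using Eop_Eop Eop_Einv comm_sym comm_funpow by auto

lemma fold_Eop: "comm g (Eop i) \<Longrightarrow> comm (fold (\<lambda>v f. Epow v (h v) \<circ> f) xs g) (Eop i)"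
  by (induction xs arbitrary: g) (auto simp: comm_comp Epow_Eop)

lemma Emon_Eop: "comm (Emon a) (Eop i)" by (simp add: Emon_def fold_Eop comm_id)

lemma pE_Eop: "comm (pE p) (Eop i)"
  unfolding comm_def pE_def
  using Emon_Eop by (simp add: comm_def lin_sum[OF lin_Eop] linD[OF lin_Eop])

lemma pE_Delta: "comm (pE p) (Delta i)"
  unfolding comm_def Delta_def
  using pE_Eop by (simp add: comm_def lin_diff[OF lin_pE])

lemma key_step: "Delta i (pE p ((Delta i ^^ l) ((pE p ^^ l) G))) = (Delta i ^^ Suc l) ((pE p ^^ Suc l) G)"
proof -
  have "comm (Delta i ^^ l) (pE p)" by (rule comm_funpow, rule comm_sym, rule pE_Delta)
  then have "pE p ((Delta i ^^ l) ((pE p ^^ l) G)) = (Delta i ^^ l) (pE p ((pE p ^^ l) G))"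
    by (simp add: comm_def)
  then show ?thesis by (simp add: funpow_swap1)
qed


definition DL :: "nat \<Rightarrow> nat \<Rightarrow> cpoly \<Rightarrow> bool" where
  "DL i d G \<longleftrightarrow> (\<forall>m\<in>Poly_Mapping.keys G. Poly_Mapping.lookup m i \<le> d)"

lemma DL_0[simp]: "DL i d 0" by (simp add: DL_def)
lemma DL_mono: "DL i d G \<Longrightarrow> d \<le> d' \<Longrightarrow> DL i d' G" by (auto simp: DL_def)
lemma DL_add: "DL i d G \<Longrightarrow> DL i d H \<Longrightarrow> DL i d (G + H)"
  using keys_add[of G H] by (auto simp: DL_def)
lemma DL_uminus: "DL i d G \<Longrightarrow> DL i d (- G)"
  by (simp add: DL_def keys_minus)
lemma DL_diff: "DL i d G \<Longrightarrow> DL i d H \<Longrightarrow> DL i d (G - H)"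
  by (metis DL_add DL_uminus diff_conv_add_uminus)
lemma DL_sum: "(\<And>a. a \<in> A \<Longrightarrow> DL i d (f a)) \<Longrightarrow> DL i d (\<Sum>a\<in>A. f a)"
  by (induction A rule: infinite_finite_induct) (auto simp: DL_add)
lemma keys_Const_mult: "Poly_Mapping.keys (Const c * G) \<subseteq> Poly_Mapping.keys G"
  by (auto simp: in_keys_iff lookup_Const_mult)
lemma DL_Const_mult: "DL i d G \<Longrightarrow> DL i d (Const c * G)"
  using keys_Const_mult by (auto simp: DL_def)
lemma DL_mult: "DL i d1 G \<Longrightarrow> DL i d2 H \<Longrightarrow> DL i (d1 + d2) (G * H)"
  using keys_mult[of G H] unfolding DL_def
  by (fastforce simp: lookup_add intro: add_mono)
lemma DL_Const: "DL i d (Const c)" by (simp add: DL_def Const_def)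
lemma DL_1: "DL i d 1" using DL_Const[of i d 1] by simp
lemma DL_power: "DL i d G \<Longrightarrow> DL i (k * d) (G ^ k)"
  by (induction k) (auto simp: DL_1 DL_mult)
lemma DL_prod: "(\<And>v. v \<in> A \<Longrightarrow> DL i (e v) (f v)) \<Longrightarrow> DL i (\<Sum>v\<in>A. e v) (\<Prod>v\<in>A. f v)"
  by (induction A rule: infinite_finite_induct) (auto simp: DL_1 DL_mult)
lemma DL_Var: "DL i (if v = i then 1 else 0) (Var v)"
  by (simp add: DL_def Var_def lookup_single when_def)

lemma DL_Var_same: "DL i 1 (Var i)" using DL_Var[of i i] by simp
lemma DL_Var_other: "v \<noteq> i \<Longrightarrow> DL i 0 (Var v)" using DL_Var[of i v] by simp

lemma DL_Mon:
  assumes "\<And>v. DL i (if v = i then 1 else 0) (\<sigma> v)"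
  shows "DL i (Poly_Mapping.lookup m i) (Mon \<sigma> m)"
proof -
  have "DL i (\<Sum>v\<in>Poly_Mapping.keys m. Poly_Mapping.lookup m v * (if v = i then 1 else 0)) (Mon \<sigma> m)"
    unfolding Mon_def by (rule DL_prod, rule DL_power, rule assms)
  moreover have "(\<Sum>v\<in>Poly_Mapping.keys m. Poly_Mapping.lookup m v * (if v = i then 1 else 0)) = Poly_Mapping.lookup m i"
    by (auto simp: in_keys_iff if_distrib cong: if_cong)
  ultimately show ?thesis by simp
qed

lemma DL_subst:
  assumes "\<And>v. DL i (if v = i then 1 else 0) (\<sigma> v)" "DL i d G"
  shows "DL i d (subst \<sigma> G)"
  unfolding subst_alt
proof (rule DL_sum)
  fix m assume m: "m \<in> Poly_Mapping.keys G"
  then have "Poly_Mapping.lookup m i \<le> d" using assms(2) by (auto simp: DL_def)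
  then show "DL i d (Const (Poly_Mapping.lookup G m) * Mon \<sigma> m)"
    by (intro DL_Const_mult DL_mono[OF DL_Mon[OF assms(1)]])
qed

definition pres :: "nat \<Rightarrow> (cpoly \<Rightarrow> cpoly) \<Rightarrow> bool" where
  "pres i f \<longleftrightarrow> (\<forall>d G. DL i d G \<longrightarrow> DL i d (f G))"

lemma pres_id: "pres i id" by (simp add: pres_def)
lemma pres_comp: "pres i f \<Longrightarrow> pres i g \<Longrightarrow> pres i (f \<circ> g)" by (simp add: pres_def)
lemma pres_funpow: "pres i f \<Longrightarrow> pres i (f ^^ n)"
  by (induction n) (auto simp: pres_id pres_comp)

lemma pres_Eop: "pres i (Eop j)"
  unfolding pres_def Eop_def
  by (auto intro!: DL_subst DL_add DL_Var_same DL_Var_other DL_1 simp del: One_nat_def)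

lemma pres_Einv: "pres i (Einv j)"
  unfolding pres_def Einv_def
  by (auto intro!: DL_subst DL_diff DL_Var_same DL_Var_other DL_1 simp del: One_nat_def)

lemma pres_Epow: "pres i (Epow j z)"
  by (simp add: Epow_def pres_Eop pres_Einv pres_funpow)

lemma pres_fold: "pres i g \<Longrightarrow> pres i (fold (\<lambda>v f. Epow v (h v) \<circ> f) xs g)"
  by (induction xs arbitrary: g) (auto simp: pres_comp pres_Epow)

lemma pres_pE: "pres i (pE p)"
  unfolding pres_def pE_def
  using pres_fold[OF pres_id] by (auto simp: Emon_def pres_def intro!: DL_sum DL_Const_mult)


lemma of_nat_cpoly: "(of_nat k :: cpoly) = Const (of_nat k)"
  by (simp add: Const_def)

lemma binom_diff_DL:
  "DL i (a - 1) ((Var i + 1) ^ a - Var i ^ a) \<and> (a = 0 \<longrightarrow> (Var i + 1) ^ a - Var i ^ a = 0)"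
proof -
  have "(Var i + 1) ^ a = (\<Sum>k<Suc a. of_nat (a choose k) * Var i ^ k)"
    by (simp add: binomial_ring lessThan_Suc_atMost)
  then have e: "(Var i + 1) ^ a - Var i ^ a = (\<Sum>k<a. of_nat (a choose k) * Var i ^ k)"
    by simp
  have "DL i (a - 1) (\<Sum>k<a. of_nat (a choose k) * Var i ^ k)"
  proof (rule DL_sum)
    fix k assume "k \<in> {..<a}"
    then have "0 + k * 1 \<le> a - 1" by auto
    then show "DL i (a - 1) (of_nat (a choose k) * Var i ^ k)"
      unfolding of_nat_cpoly
      by (rule DL_mono[OF DL_mult[OF DL_Const DL_power[OF DL_Var_same]]])
  qed
  with e show ?thesis by simp
qed

lemma single_as_Const: "Poly_Mapping.single m c = Const c * Poly_Mapping.single m 1"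
  by (simp add: Const_def mult_single)

lemma Delta_single:
  "Delta i (Poly_Mapping.single m 1) =
     ((Var i + 1) ^ Poly_Mapping.lookup m i - Var i ^ Poly_Mapping.lookup m i)
     * (\<Prod>v\<in>Poly_Mapping.keys m - {i}. Var v ^ Poly_Mapping.lookup m v)"
proof -
  define \<sigma> where "\<sigma> = (\<lambda>v. if v = i then Var v + 1 else Var v)"
  let ?K = "insert i (Poly_Mapping.keys m)"
  have "Eop i (Poly_Mapping.single m 1) = Mon \<sigma> m"
    by (simp add: Eop_def \<sigma>_def subst_single)
  also have "\<dots> = (\<Prod>v\<in>?K. \<sigma> v ^ Poly_Mapping.lookup m v)"
    by (rule Mon_superset) auto
  also have "\<dots> = \<sigma> i ^ Poly_Mapping.lookup m i * (\<Prod>v\<in>?K - {i}. \<sigma> v ^ Poly_Mapping.lookup m v)"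
    by (rule prod.remove) auto
  also have "(\<Prod>v\<in>?K - {i}. \<sigma> v ^ Poly_Mapping.lookup m v) = (\<Prod>v\<in>Poly_Mapping.keys m - {i}. Var v ^ Poly_Mapping.lookup m v)"
    by (rule prod.cong) (auto simp: \<sigma>_def)
  finally have e1: "Eop i (Poly_Mapping.single m 1) = (Var i + 1) ^ Poly_Mapping.lookup m i * (\<Prod>v\<in>Poly_Mapping.keys m - {i}. Var v ^ Poly_Mapping.lookup m v)"
    by (simp add: \<sigma>_def)
  have "Poly_Mapping.single m 1 = Mon Var m" by (simp add: Mon_Var)
  also have "\<dots> = (\<Prod>v\<in>?K. Var v ^ Poly_Mapping.lookup m v)"
    by (rule Mon_superset) auto
  also have "\<dots> = Var i ^ Poly_Mapping.lookup m i * (\<Prod>v\<in>?K - {i}. Var v ^ Poly_Mapping.lookup m v)"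
    by (rule prod.remove) auto
  finally have e2: "Poly_Mapping.single m 1 = Var i ^ Poly_Mapping.lookup m i * (\<Prod>v\<in>Poly_Mapping.keys m - {i}. Var v ^ Poly_Mapping.lookup m v)"
    by simp
  show ?thesis unfolding Delta_def
    by (subst e1, subst e2) (simp add: left_diff_distrib)
qed

lemma DL_Delta_single:
  "DL i (Poly_Mapping.lookup m i - 1) (Delta i (Poly_Mapping.single m 1))
   \<and> (Poly_Mapping.lookup m i = 0 \<longrightarrow> Delta i (Poly_Mapping.single m 1) = 0)"
proof -
  have R: "DL i 0 (\<Prod>v\<in>Poly_Mapping.keys m - {i}. Var v ^ Poly_Mapping.lookup m v)"
    using DL_prod[of "Poly_Mapping.keys m - {i}" i "\<lambda>_. 0" "\<lambda>v. Var v ^ Poly_Mapping.lookup m v"]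
    using DL_power[OF DL_Var_other] by auto
  show ?thesis unfolding Delta_single
    using DL_mult[OF conjunct1[OF binom_diff_DL] R] binom_diff_DL by auto
qed

lemma DL_Delta:
  assumes "DL i d G"
  shows "DL i (d - 1) (Delta i G) \<and> (d = 0 \<longrightarrow> Delta i G = 0)"
proof -
  have eG: "G = (\<Sum>m\<in>Poly_Mapping.keys G. Const (Poly_Mapping.lookup G m) * Poly_Mapping.single m 1)"
    by (subst pm_expand_keys[of G]) (simp add: single_as_Const[symmetric])
  have "Delta i G = Delta i (\<Sum>m\<in>Poly_Mapping.keys G. Const (Poly_Mapping.lookup G m) * Poly_Mapping.single m 1)"
    using eG by (rule arg_cong)
  also have "\<dots> = (\<Sum>m\<in>Poly_Mapping.keys G. Const (Poly_Mapping.lookup G m) * Delta i (Poly_Mapping.single m 1))"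
    by (simp only: lin_sum[OF lin_Delta] linD(2)[OF lin_Delta])
  finally have e: "Delta i G = (\<Sum>m\<in>Poly_Mapping.keys G. Const (Poly_Mapping.lookup G m) * Delta i (Poly_Mapping.single m 1))" .
  have le: "\<And>m. m \<in> Poly_Mapping.keys G \<Longrightarrow> Poly_Mapping.lookup m i \<le> d"
    using assms by (auto simp: DL_def)
  show ?thesis unfolding e
  proof
    show "DL i (d - 1) (\<Sum>m\<in>Poly_Mapping.keys G. Const (Poly_Mapping.lookup G m) * Delta i (Poly_Mapping.single m 1))"
    proof (rule DL_sum, rule DL_Const_mult)
      fix m assume "m \<in> Poly_Mapping.keys G"
      then have "Poly_Mapping.lookup m i - 1 \<le> d - 1" using le by (simp add: diff_le_mono)
      then show "DL i (d - 1) (Delta i (Poly_Mapping.single m 1))"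
        by (rule DL_mono[OF conjunct1[OF DL_Delta_single]])
    qed
    show "d = 0 \<longrightarrow> (\<Sum>m\<in>Poly_Mapping.keys G. Const (Poly_Mapping.lookup G m) * Delta i (Poly_Mapping.single m 1)) = 0"
      using le DL_Delta_single by (auto intro!: sum.neutral)
  qed
qed

lemma DL_Delta_pow:
  assumes "DL i d G"
  shows "DL i (d - l) ((Delta i ^^ l) G) \<and> (d < l \<longrightarrow> (Delta i ^^ l) G = 0)"
proof (induction l)
  case 0 then show ?case using assms by simp
next
  case (Suc l)
  have A: "DL i (d - l - 1) ((Delta i ^^ Suc l) G)"
    using DL_Delta[of i "d - l"] Suc by simp
  have B: "(Delta i ^^ Suc l) G = 0" if "d < Suc l"
  proof (cases "d < l")
    case True
    then show ?thesis using Suc lin_0[OF lin_Delta] by simp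
  next
    case False
    then have "d - l = 0" using that by simp
    then show ?thesis using Suc DL_Delta[of i "d - l"] by simp
  qed
  have "d - l - 1 = d - Suc l" by simp
  then show ?case using A B by metis
qed

lemma DL_deg: "DL i (deg i G) G"
  unfolding DL_def
proof
  fix m assume "m \<in> Poly_Mapping.keys G"
  then show "Poly_Mapping.lookup m i \<le> deg i G"
    unfolding deg_def by (intro Max_ge) auto
qed

lemma deg_le: "DL i d G \<Longrightarrow> deg i G \<le> d"
  by (auto simp: DL_def deg_def)

lemma deg_attained:
  assumes "deg i G > 0"
  shows "\<exists>m\<in>Poly_Mapping.keys G. Poly_Mapping.lookup m i = deg i G"
proof -
  have "deg i G \<in> insert 0 ((\<lambda>m. Poly_Mapping.lookup m i) ` Poly_Mapping.keys G)"
    unfolding deg_def by (rule Max_in) auto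
  with assms show ?thesis by auto
qed

lemma deg_add_small:
  assumes "DL i (deg i G - 1) H" "deg i G = 0 \<Longrightarrow> H = 0"
  shows "deg i (G + H) = deg i G"
proof (cases "deg i G = 0")
  case True then show ?thesis using assms by simp
next
  case False
  then obtain m where m: "m \<in> Poly_Mapping.keys G" "Poly_Mapping.lookup m i = deg i G"
    using deg_attained by blast
  then have "m \<notin> Poly_Mapping.keys H" using assms(1) False by (auto simp: DL_def)
  then have "m \<in> Poly_Mapping.keys (G + H)" using m by (auto simp: in_keys_iff lookup_add)
  then have "Poly_Mapping.lookup m i \<le> deg i (G + H)"
    unfolding deg_def by (intro Max_ge) auto
  then have "deg i G \<le> deg i (G + H)" using m by simp
  moreover have "deg i (G + H) \<le> deg i G"
    by (rule deg_le, rule DL_add[OF DL_deg DL_mono[OF assms(1)]]) simp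
  ultimately show ?thesis by simp
qed


definition VL :: "nat set \<Rightarrow> cpoly \<Rightarrow> bool" where
  "VL S G \<longleftrightarrow> (\<forall>m\<in>Poly_Mapping.keys G. Poly_Mapping.keys m \<subseteq> S)"

lemma VL_iff: "VL S G \<longleftrightarrow> vars G \<subseteq> S" by (auto simp: VL_def vars_def)

lemma VL_0[simp]: "VL S 0" by (simp add: VL_def)
lemma VL_add: "VL S G \<Longrightarrow> VL S H \<Longrightarrow> VL S (G + H)"
  using keys_add[of G H] by (auto simp: VL_def)
lemma VL_uminus: "VL S G \<Longrightarrow> VL S (- G)"
  by (simp add: VL_def keys_minus)
lemma VL_diff: "VL S G \<Longrightarrow> VL S H \<Longrightarrow> VL S (G - H)"
  by (metis VL_add VL_uminus diff_conv_add_uminus)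
lemma VL_sum: "(\<And>a. a \<in> A \<Longrightarrow> VL S (f a)) \<Longrightarrow> VL S (\<Sum>a\<in>A. f a)"
  by (induction A rule: infinite_finite_induct) (auto simp: VL_add)
lemma VL_Const_mult: "VL S G \<Longrightarrow> VL S (Const c * G)"
  using keys_Const_mult by (auto simp: VL_def)
lemma VL_mult: "VL S G \<Longrightarrow> VL S H \<Longrightarrow> VL S (G * H)"
  using keys_mult[of G H] unfolding VL_def
  by (fastforce dest: subsetD[OF keys_add])
lemma VL_1: "VL S 1" by (simp add: VL_def)
lemma VL_power: "VL S G \<Longrightarrow> VL S (G ^ k)"
  by (induction k) (auto simp: VL_1 VL_mult)
lemma VL_prod: "(\<And>v. v \<in> A \<Longrightarrow> VL S (f v)) \<Longrightarrow> VL S (\<Prod>v\<in>A. f v)"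
  by (induction A rule: infinite_finite_induct) (auto simp: VL_1 VL_mult)
lemma VL_Var: "v \<in> S \<Longrightarrow> VL S (Var v)"
  by (simp add: VL_def Var_def)

lemma VL_subst:
  assumes "\<And>v. v \<in> S \<Longrightarrow> VL S (\<sigma> v)" "VL S G"
  shows "VL S (subst \<sigma> G)"
  unfolding subst_alt Mon_def
  using assms by (auto simp: VL_def[of S G] intro!: VL_sum VL_Const_mult VL_prod VL_power)

definition presV :: "nat set \<Rightarrow> (cpoly \<Rightarrow> cpoly) \<Rightarrow> bool" where
  "presV S f \<longleftrightarrow> (\<forall>G. VL S G \<longrightarrow> VL S (f G))"

lemma presV_id: "presV S id" by (simp add: presV_def)
lemma presV_comp: "presV S f \<Longrightarrow> presV S g \<Longrightarrow> presV S (f \<circ> g)" by (simp add: presV_def)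
lemma presV_funpow: "presV S f \<Longrightarrow> presV S (f ^^ n)"
  by (induction n) (auto simp: presV_id presV_comp)
lemma presV_Eop: "presV S (Eop j)"
  unfolding presV_def Eop_def by (auto intro!: VL_subst VL_add VL_Var VL_1)
lemma presV_Einv: "presV S (Einv j)"
  unfolding presV_def Einv_def by (auto intro!: VL_subst VL_diff VL_Var VL_1)
lemma presV_Epow: "presV S (Epow j z)"
  by (simp add: Epow_def presV_Eop presV_Einv presV_funpow)
lemma presV_fold: "presV S g \<Longrightarrow> presV S (fold (\<lambda>v f. Epow v (h v) \<circ> f) xs g)"
  by (induction xs arbitrary: g) (auto simp: presV_comp presV_Epow)
lemma presV_pE: "presV S (pE p)"
  unfolding presV_def pE_def
  using presV_fold[OF presV_id] by (auto simp: Emon_def presV_def intro!: VL_sum VL_Const_mult)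
lemma presV_Delta: "presV S (Delta j)"
  unfolding presV_def Delta_def using presV_Eop by (auto simp: presV_def intro: VL_diff)

lemma key_step2:
  "(Delta i ^^ l) ((pE p ^^ l) (Delta i (pE p G))) = (Delta i ^^ Suc l) ((pE p ^^ Suc l) G)"
proof -
  have "comm (pE p ^^ l) (Delta i)" by (rule comm_funpow, rule pE_Delta)
  then have "(pE p ^^ l) (Delta i (pE p G)) = Delta i ((pE p ^^ l) (pE p G))"
    by (simp add: comm_def)
  then show ?thesis by (simp add: funpow_swap1)
qed


theorem lemma1:
  fixes n i :: nat and p :: claurent
    and Op Inv :: "cpoly \<Rightarrow> cpoly" and T :: "nat \<Rightarrow> cpoly \<Rightarrow> cpoly"
  assumes "i < n" and "lvars p \<subseteq> {..<n}"
  defines "Op \<equiv> (\<lambda>G. G + Delta i (pE p G))"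
    and "T \<equiv> (\<lambda>l G. Const ((-1) ^ l) * (Delta i ^^ l) ((pE p ^^ l) G))"
    and "Inv \<equiv> (\<lambda>G. \<Sum>l < (LEAST N. \<forall>l\<ge>N. T l G = 0). T l G)"
  shows "bij_betw Op (PolyRing n) (PolyRing n)
    \<and> (\<forall>G\<in>PolyRing n. \<exists>N. \<forall>l\<ge>N. T l G = 0)
    \<and> (\<forall>G\<in>PolyRing n. Inv G \<in> PolyRing n \<and> Op (Inv G) = G \<and> Inv (Op G) = G)
    \<and> (\<forall>G\<in>PolyRing n. deg i G = deg i (Op G) \<and> deg i G = deg i (Inv G))"
proof -
  let ?F = "\<lambda>l G. (Delta i ^^ l) ((pE p ^^ l) G)"
  have linF: "lin (?F l)" for l
    using lin_comp[OF lin_funpow[OF lin_Delta] lin_funpow[OF lin_pE]] by (simp add: o_def)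
  have DLF: "DL i (deg i G - l) (?F l G) \<and> (deg i G < l \<longrightarrow> ?F l G = 0)" for l G
  proof -
    have "DL i (deg i G) ((pE p ^^ l) G)"
      using pres_funpow[OF pres_pE] DL_deg by (auto simp: pres_def)
    then show ?thesis by (rule DL_Delta_pow)
  qed
  have Tvan: "T l G = 0" if "deg i G < l" for l G
    using DLF[of G l] that by (simp add: T_def)
  have T0: "T 0 G = G" for G by (simp add: T_def)
  have TOp: "T l (Op G) = T l G - T (Suc l) G" for l G
    by (simp add: Op_def T_def linD(1)[OF linF] key_step2 distrib_left Const_uminus)
  have ex: "\<exists>N. \<forall>l\<ge>N. T l G = 0" for G
    using Tvan by (intro exI[of _ "Suc (deg i G)"]) auto
  have InvM: "Inv G = (\<Sum>l<M. T l G)" if "\<forall>l\<ge>M. T l G = 0" for G M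
  proof -
    define N where "N = (LEAST N. \<forall>l\<ge>N. T l G = 0)"
    have NN: "\<forall>l\<ge>N. T l G = 0" unfolding N_def using ex[of G] by (rule LeastI_ex)
    have NM: "N \<le> M" unfolding N_def using that by (rule Least_le)
    have "(\<Sum>l<M. T l G) = (\<Sum>l<N. T l G)"
    proof (rule sum.mono_neutral_right)
      show "\<forall>l\<in>{..<M} - {..<N}. T l G = 0" using NN by simp
    qed (use NM in auto)
    then show ?thesis by (simp add: Inv_def N_def)
  qed
  have InvD: "Inv G = (\<Sum>l<Suc (deg i G). T l G)" for G
    by (rule InvM) (auto intro: Tvan)
  have OpInv: "Op (Inv G) = G" for G
  proof -
    let ?M = "Suc (deg i G)"
    have "Op (Inv G) = (\<Sum>l<?M. T l G) + (\<Sum>l<?M. Delta i (pE p (T l G)))"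
      unfolding Op_def InvD by (simp only: lin_sum[OF lin_Delta] lin_sum[OF lin_pE])
    also have "(\<Sum>l<?M. Delta i (pE p (T l G))) = (\<Sum>l<?M. - T (Suc l) G)"
    proof (rule sum.cong)
      fix l
      have "Delta i (pE p (T l G)) = Const ((-1) ^ l) * Delta i (pE p (?F l G))"
        by (simp add: T_def linD(2)[OF lin_Delta] linD(2)[OF lin_pE])
      also have "\<dots> = - T (Suc l) G"
        by (simp add: T_def key_step Const_uminus)
      finally show "Delta i (pE p (T l G)) = - T (Suc l) G" .
    qed simp
    also have "(\<Sum>l<?M. T l G) + (\<Sum>l<?M. - T (Suc l) G) = - (\<Sum>l<?M. T (Suc l) G - T l G)"
      by (simp add: sum_subtractf sum_negf)
    also have "\<dots> = T 0 G - T ?M G"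
      by (subst sum_lessThan_telescope[where f="\<lambda>l. T l G"]) simp
    also have "\<dots> = G" using T0 Tvan by simp
    finally show ?thesis .
  qed
  have InvOp: "Inv (Op G) = G" for G
  proof -
    let ?M = "Suc (deg i G)"
    have "Inv (Op G) = (\<Sum>l<?M. T l (Op G))"
      by (rule InvM) (auto simp: TOp Tvan)
    also have "\<dots> = - (\<Sum>l<?M. T (Suc l) G - T l G)"
      by (simp add: TOp sum_negf[symmetric])
    also have "\<dots> = T 0 G - T ?M G"
      by (subst sum_lessThan_telescope[where f="\<lambda>l. T l G"]) simp
    also have "\<dots> = G" using T0 Tvan by simp
    finally show ?thesis .
  qed
  have VLT: "VL {..<n} (T l G)" if "VL {..<n} G" for l G
    using that presV_funpow[OF presV_Delta] presV_funpow[OF presV_pE]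
    by (auto simp: T_def presV_def intro!: VL_Const_mult)
  have InvR: "Inv G \<in> PolyRing n" if "G \<in> PolyRing n" for G
  proof -
    have "VL {..<n} G" using that by (simp add: PolyRing_def VL_iff)
    then have "VL {..<n} (\<Sum>l<Suc (deg i G). T l G)" by (intro VL_sum VLT)
    then show ?thesis by (simp only: InvD PolyRing_def VL_iff mem_Collect_eq)
  qed
  have OpR: "Op G \<in> PolyRing n" if "G \<in> PolyRing n" for G
    using that presV_Delta presV_pE
    by (auto simp: PolyRing_def VL_iff[symmetric] Op_def presV_def intro!: VL_add)
  have degOp: "deg i G = deg i (Op G)" for G
  proof -
    have "DL i (deg i G) (pE p G)" using pres_pE DL_deg by (auto simp: pres_def)
    then have "DL i (deg i G - 1) (Delta i (pE p G)) \<and> (deg i G = 0 \<longrightarrow> Delta i (pE p G) = 0)"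
      by (rule DL_Delta)
    then show ?thesis unfolding Op_def by (intro deg_add_small[symmetric]) auto
  qed
  have degInv: "deg i G = deg i (Inv G)" for G
  proof -
    let ?d = "deg i G"
    have "Inv G = G + (\<Sum>l<?d. T (Suc l) G)"
      unfolding InvD by (subst sum.lessThan_Suc_shift) (simp only: T0)
    moreover have "DL i (?d - 1) (\<Sum>l<?d. T (Suc l) G)"
    proof (rule DL_sum)
      fix l assume "l \<in> {..<?d}"
      have "DL i (?d - Suc l) (?F (Suc l) G)" using DLF by blast
      then have "DL i (?d - 1) (?F (Suc l) G)" by (rule DL_mono) simp
      then show "DL i (?d - 1) (T (Suc l) G)" by (simp add: T_def DL_Const_mult)
    qed
    ultimately show ?thesis
      by (simp add: deg_add_small)
  qed
  have bij: "bij_betw Op (PolyRing n) (PolyRing n)"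
    by (rule bij_betw_byWitness[where f'=Inv]) (auto simp: InvOp OpInv InvR OpR)
  show ?thesis using bij ex InvR OpInv InvOp degOp degInv by blast
qed

end
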